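(* Let $M\subset\mathbb C^{n+d}$ be a generic real submanifold through $0$ given locally by $\Re e\, w_j={}^t\bar zA_jz+O(3)$, $j=1,\dots,d$ (with $A_j$ Hermitian $n\times n$, and $z$, $\Im m\, w$ of weights one and two in the remainder), strongly Levi nondegenerate at $0$. Let $b\in\mathbb R^d$ with $\sum_jb_jA_j$ invertible and let $a\in\mathbb C^d$ be sufficiently small. If $M$ is $\mathfrak D(a)$-nondegenerate at $0$, then there exists $V\in\mathbb C^n$ such that $M$ is stationary minimal at $0$ for $(a,b-a-\overline a,V)$.
   Context: Strongly Levi nondegenerate at $0$: some real combination $\sum_jc_jA_j$ is invertible. Set $P=\sum_ja_jA_j$, $A=\sum_j(b_j-a_j-\overline{a_j})A_j$ (invertible for $a$ small) and let $X$ be the unique $n\times n$ solution with $\|X\|<1$ of $PX^2+AX+{}^t\overline P=0$. $M$ is $\mathfrak D(a)$-nondegenerate at $0$ if there exists $V\in\mathbb C^n$ such that the real $d\times d$ matrix $\Re e\big(\sum_{r=0}^\infty{}^t\overline V\,{}^t\overline X^{\,r}A_jA^{-1}A_sX^rV\big)_{j,s}$ is nondegenerate. $M$ is stationary minimal at $0$ for $(a,b-a-\overline a,V)$ if $A_1,\dots,A_d$ restricted to $\mathrm{span}_{\mathbb R}\{V,XV,X^2V,\dots\}$ are $\mathbb R$-linearly independent, i.e. $\lambda\in\mathbb R^d$ and $\sum_j\lambda_jA_jX^kV=0$ for all $k\ge0$ imply $\lambda=0$. *)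

theory Defs
  imports "HOL-Analysis.Analysis"
begin

definition cscale :: "complex \<Rightarrow> complex^'n^'m \<Rightarrow> complex^'n^'m" where
  "cscale c M = (\<chi> i k. c * M$i$k)"

text \<open>matrix power w.r.t. the matrix product (note: ^ on vec is componentwise)\<close>
primrec matpow :: "complex^'n^'n \<Rightarrow> nat \<Rightarrow> complex^'n^'n" where
  "matpow X 0 = mat 1"
| "matpow X (Suc r) = X ** matpow X r"

definition ctrans :: "complex^'n^'m \<Rightarrow> complex^'m^'n" where
  "ctrans M = (\<chi> i k. cnj (M$k$i))"

definition hprod :: "complex^'n \<Rightarrow> complex^'n \<Rightarrow> complex" where
  "hprod V W = (\<Sum>i\<in>UNIV. cnj (V$i) * W$i)"

definition hermitian :: "complex^'n^'n \<Rightarrow> bool" where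
  "hermitian M \<longleftrightarrow> ctrans M = M"

definition strongly_Levi_nondeg :: "('d::finite \<Rightarrow> complex^'n^'n) \<Rightarrow> bool" where
  "strongly_Levi_nondeg Am \<longleftrightarrow>
     (\<exists>c::real^'d. invertible (\<Sum>j\<in>UNIV. cscale (complex_of_real (c$j)) (Am j)))"

definition Pmat :: "('d::finite \<Rightarrow> complex^'n^'n) \<Rightarrow> complex^'d \<Rightarrow> complex^'n^'n" where
  "Pmat Am a = (\<Sum>j\<in>UNIV. cscale (a$j) (Am j))"

definition Amat :: "('d::finite \<Rightarrow> complex^'n^'n) \<Rightarrow> complex^'d \<Rightarrow> real^'d \<Rightarrow> complex^'n^'n" where
  "Amat Am a b = (\<Sum>j\<in>UNIV. cscale (complex_of_real (b$j) - a$j - cnj (a$j)) (Am j))"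

definition Xsol :: "('d::finite \<Rightarrow> complex^'n^'n) \<Rightarrow> complex^'d \<Rightarrow> real^'d \<Rightarrow> complex^'n^'n" where
  "Xsol Am a b = (THE X. onorm (\<lambda>v. X *v v) < 1 \<and>
      Pmat Am a ** X ** X + Amat Am a b ** X + ctrans (Pmat Am a) = 0)"

definition D_nondeg :: "('d::finite \<Rightarrow> complex^'n^'n) \<Rightarrow> complex^'d \<Rightarrow> real^'d \<Rightarrow> bool" where
  "D_nondeg Am a b \<longleftrightarrow>
     (let X = Xsol Am a b; A = Amat Am a b in
      \<exists>V::complex^'n.
        det (\<chi> j s. Re (\<Sum>r. hprod ((matpow X r) *v V)
               ((Am j ** matrix_inv A ** Am s ** (matpow X r)) *v V))) \<noteq> 0)"

text \<open>Note: t(conj V) t(conj X)^r M X^r V = hprod (X^r V) (M X^r V).\<close>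

definition stationary_minimal :: "('d::finite \<Rightarrow> complex^'n^'n) \<Rightarrow> complex^'d \<Rightarrow> real^'d \<Rightarrow> complex^'n \<Rightarrow> bool" where
  "stationary_minimal Am a b V \<longleftrightarrow>
     (let X = Xsol Am a b in
      \<forall>lam::real^'d. (\<forall>k::nat. (\<Sum>j\<in>UNIV. cscale (complex_of_real (lam$j)) (Am j)) *v ((matpow X k) *v V) = 0)
        \<longrightarrow> lam = 0)"

end

theory Submission imports Defs begin

lemma norm_le_sum_nth:
  fixes x :: "'a::real_normed_vector^'n"
  shows "norm x \<le> (\<Sum>i\<in>UNIV. norm (x$i))"
  unfolding norm_vec_def by (rule L2_set_le_sum) simp

lemma norm_vec_bound:
  fixes x :: "'a::real_normed_vector^'n"
  assumes "\<And>i. norm (x$i) \<le> t"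
  shows "norm x \<le> real CARD('n) * t"
proof -
  have "norm x \<le> (\<Sum>i\<in>UNIV. norm (x$i))" by (rule norm_le_sum_nth)
  also have "\<dots> \<le> (\<Sum>i\<in>(UNIV::'n set). t)" by (rule sum_mono) (use assms in auto)
  finally show ?thesis by simp
qed

lemma norm_mat_bound:
  fixes M :: "'a::real_normed_vector^'n^'n"
  assumes "\<And>i k. norm (M$i$k) \<le> t"
  shows "norm M \<le> real CARD('n) * (real CARD('n) * t)"
  by (rule norm_vec_bound, rule norm_vec_bound, rule assms)

lemma entry_le: "norm ((M::'a::real_normed_vector^'n^'m)$i$k) \<le> norm M"
  using Finite_Cartesian_Product.norm_nth_le[of "M$i" k] Finite_Cartesian_Product.norm_nth_le[of M i] by linarith

lemma card_ge1: "1 \<le> real CARD('n::finite)"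
  by (simp add: Suc_le_eq)

lemma NN_le: "0 \<le> x \<Longrightarrow> real CARD('n::finite) * (real CARD('n) * x) \<le> real CARD('n) ^ 3 * x"
proof -
  assume x: "0 \<le> x"
  have "real CARD('n) * real CARD('n) * 1 \<le> real CARD('n) * real CARD('n) * real CARD('n)"
    using card_ge1[where 'n='n] by (intro mult_left_mono) auto
  then have "real CARD('n) * real CARD('n) \<le> real CARD('n) ^ 3" by (simp add: power3_eq_cube)
  from mult_right_mono[OF this x] show ?thesis by (simp add: mult_ac)
qed

abbreviation KK :: "'n::finite itself \<Rightarrow> real" where
  "KK t \<equiv> real CARD('n) ^ 3"

lemma mat_mult_norm:
  fixes A B :: "complex^'n^'n"
  shows "norm (A ** B) \<le> KK TYPE('n) * norm A * norm B"
proof -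
  have "norm ((A ** B)$i$k) \<le> real CARD('n) * (norm A * norm B)" for i k
  proof -
    have "norm ((A ** B)$i$k) = norm (\<Sum>j\<in>UNIV. A$i$j * B$j$k)"
      by (simp add: matrix_matrix_mult_def)
    also have "\<dots> \<le> (\<Sum>j\<in>UNIV. norm (A$i$j * B$j$k))" by (rule norm_sum)
    also have "\<dots> \<le> (\<Sum>j\<in>(UNIV::'n set). norm A * norm B)"
      by (rule sum_mono) (simp add: norm_mult entry_le mult_mono')
    finally show ?thesis by simp
  qed
  then have "norm (A ** B) \<le> real CARD('n) * (real CARD('n) * (real CARD('n) * (norm A * norm B)))"
    by (rule norm_mat_bound)
  then show ?thesis by (simp add: power3_eq_cube mult_ac)
qed

lemma mat_vec_norm:
  fixes A :: "complex^'n^'n"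
  shows "norm (A *v v) \<le> KK TYPE('n) * norm A * norm v"
proof -
  have "norm ((A *v v)$i) \<le> real CARD('n) * (norm A * norm v)" for i
  proof -
    have "norm ((A *v v)$i) = norm (\<Sum>j\<in>UNIV. A$i$j * v$j)"
      by (simp add: matrix_vector_mult_def)
    also have "\<dots> \<le> (\<Sum>j\<in>UNIV. norm (A$i$j * v$j))" by (rule norm_sum)
    also have "\<dots> \<le> (\<Sum>j\<in>(UNIV::'n set). norm A * norm v)"
      by (rule sum_mono) (simp add: norm_mult, intro mult_mono entry_le Finite_Cartesian_Product.norm_nth_le norm_ge_zero)
    finally show ?thesis by simp
  qed
  then have "norm (A *v v) \<le> real CARD('n) * (real CARD('n) * (norm A * norm v))"
    by (rule norm_vec_bound)
  also have "\<dots> \<le> KK TYPE('n) * (norm A * norm v)"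
    by (rule NN_le) simp
  finally show ?thesis by (simp add: mult_ac)
qed

lemma onorm_mat:
  fixes A :: "complex^'n^'n"
  shows "onorm (\<lambda>v. A *v v) \<le> KK TYPE('n) * norm A"
  by (rule onorm_le) (simp add: mat_vec_norm)

lemma norm_ctrans:
  fixes A :: "complex^'n^'n"
  shows "norm (ctrans A) \<le> KK TYPE('n) * norm A"
proof -
  have "norm (ctrans A) \<le> real CARD('n) * (real CARD('n) * norm A)"
    by (rule norm_mat_bound) (simp add: ctrans_def entry_le)
  also have "\<dots> \<le> KK TYPE('n) * norm A"
    by (rule NN_le) simp
  finally show ?thesis by (simp add: mult_ac)
qed

lemma norm_cscale:
  fixes A :: "complex^'n^'n"
  shows "norm (cscale c A) \<le> KK TYPE('n) * (cmod c * norm A)"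
proof -
  have "norm (cscale c A) \<le> real CARD('n) * (real CARD('n) * (cmod c * norm A))"
    by (rule norm_mat_bound) (simp add: cscale_def norm_mult entry_le mult_left_mono)
  also have "\<dots> \<le> KK TYPE('n) * (cmod c * norm A)"
    by (rule NN_le) simp
  finally show ?thesis by (simp add: mult_ac)
qed


lemma mv_assoc: "(A ** B) *v x = A *v (B *v (x::complex^'n))"
  for A B :: "complex^'n^'n"
  by (simp add: matrix_vector_mul_assoc)

lemma mat_ext: "(\<And>x. A *v x = B *v x) \<Longrightarrow> A = (B::complex^'n^'m)"
  by (simp add: matrix_eq)

lemma quad_vec:
  fixes P X B0 E :: "complex^'n^'n"
  assumes "P ** X ** X + (B0 - E) ** X + ctrans P = 0"
  shows "B0 *v (X *v w) = E *v (X *v w) - P *v (X *v (X *v w)) - ctrans P *v w"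
proof -
  have "(P ** X ** X + (B0 - E) ** X + ctrans P) *v w = 0" using assms by simp
  then have "P *v (X *v (X *v w)) + (B0 *v (X *v w) - E *v (X *v w)) + ctrans P *v w = 0"
    by (simp add: mv_assoc matrix_vector_mult_add_rdistrib matrix_vector_mult_diff_rdistrib)
  then show ?thesis by (simp add: algebra_simps eq_neg_iff_add_eq_0 add_eq_0_iff2)
qed

lemma quad_solution:
  fixes B0 :: "complex^'n^'n"
  assumes inv: "invertible B0"
  shows "\<exists>\<eta>>0. \<forall>E P. norm E \<le> \<eta> \<longrightarrow> norm P \<le> \<eta> \<longrightarrow>
     (\<exists>!X. onorm (\<lambda>v. X *v v) < 1 \<and> P ** X ** X + (B0 - E) ** X + ctrans P = 0)"
proof -
  define K where "K = KK TYPE('n)"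
  define Bi where "Bi = matrix_inv B0"
  define c where "c = norm Bi"
  have K1: "1 \<le> K" unfolding K_def using card_ge1[where 'n='n] by simp
  have c0: "0 \<le> c" unfolding c_def by simp
  have Kpos: "0 < K" using K1 by simp
  have BiB: "Bi ** B0 = mat 1" and BBi: "B0 ** Bi = mat 1"
    using inv unfolding Bi_def invertible_def matrix_inv_def by (metis (mono_tags, lifting) someI_ex)+
  have BiBv: "Bi *v (B0 *v u) = u" for u by (simp add: matrix_vector_mul_assoc BiB)
  have BBv: "B0 *v (Bi *v u) = u" for u by (simp add: matrix_vector_mul_assoc BBi)
  define \<eta> where "\<eta> = 1 / (4 * K^3 * (c+1))"
  have eta0: "0 < \<eta>" unfolding \<eta>_def using K1 c0 by simp
  have key: "K^2 * c * \<eta> * 2 \<le> 1 / (2*K)"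
  proof -
    have h: "4*K^3*(c+1)*\<eta> = 1" unfolding \<eta>_def using Kpos c0 by simp
    have "K^2 * c * \<eta> * 2 * (2*K) = 4*K^3*c*\<eta>"
      by (simp add: power2_eq_square power3_eq_cube algebra_simps)
    also have "\<dots> \<le> 4*K^3*(c+1)*\<eta>" using Kpos eta0 by (simp add: algebra_simps)
    finally have "K^2 * c * \<eta> * 2 * (2*K) \<le> 1" using h by simp
    then show ?thesis using Kpos by (simp add: field_simps)
  qed
  have MM: "norm (A ** B) \<le> K * norm A * norm B" for A B :: "complex^'n^'n"
    unfolding K_def by (rule mat_mult_norm)
  have MV: "norm (A *v v) \<le> K * norm A * norm v" for A :: "complex^'n^'n" and v
    unfolding K_def by (rule mat_vec_norm)
  show ?thesis
  proof (intro exI[of _ \<eta>] conjI allI impI eta0)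
    fix E P :: "complex^'n^'n"
    assume E: "norm E \<le> \<eta>" and P: "norm P \<le> \<eta>"
    define r where "r = 1 / (2*K)"
    have r0: "0 < r" and r2: "r \<le> 1/2" and Kr: "K * r = 1/2" unfolding r_def using K1 by auto
    define S where "S = cball (0::complex^'n^'n) r"
    define T where "T X = Bi ** (E ** X - P ** X ** X - ctrans P)" for X
    have "\<exists>!X\<in>S. T X = X"
    proof (rule Banach_fix[where c="1/2"])
      show "complete S" unfolding S_def by (simp add: complete_eq_closed)
      show "S \<noteq> {}" unfolding S_def using r0 by auto
      show "T ` S \<subseteq> S"
      proof
        fix Y assume "Y \<in> T ` S"
        then obtain X where X: "norm X \<le> r" and Y: "Y = T X" unfolding S_def by auto
        have "norm (E ** X) \<le> K * \<eta> * r"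
          using MM[of E X] E X K1 by (smt (verit) mult_mono mult_nonneg_nonneg norm_ge_zero)
        moreover have "norm (P ** X ** X) \<le> K * (K * \<eta> * r) * r"
        proof -
          have "norm (P ** X) \<le> K * \<eta> * r"
            using MM[of P X] P X K1 by (smt (verit) mult_mono mult_nonneg_nonneg norm_ge_zero)
          then show ?thesis
            using MM[of "P ** X" X] X K1 by (smt (verit) mult_mono mult_nonneg_nonneg norm_ge_zero)
        qed
        moreover have "norm (ctrans P) \<le> K * \<eta>"
          using norm_ctrans[of P] P K1 unfolding K_def by (smt (verit) mult_left_mono)
        ultimately have "norm (E ** X - P ** X ** X - ctrans P) \<le> K * \<eta> * r + K * (K * \<eta> * r) * r + K * \<eta>"
          by (smt (verit) norm_triangle_ineq4)
        also have "\<dots> = K * \<eta> * (r + (K * r) * r + 1)" by (simp add: algebra_simps)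
        also have "\<dots> \<le> K * \<eta> * 2"
        proof -
          have "r + (K * r) * r + 1 \<le> 2" unfolding Kr using r2 by simp
          then show ?thesis using K1 eta0 by (intro mult_left_mono) auto
        qed
        finally have n1: "norm (E ** X - P ** X ** X - ctrans P) \<le> K * \<eta> * 2" .
        have "norm Y \<le> K * c * (K * \<eta> * 2)"
          unfolding Y T_def c_def using MM n1 K1
          by (smt (verit) c_def c0 mult_left_mono mult_nonneg_nonneg)
        also have "\<dots> = K^2 * c * \<eta> * 2" by (simp add: power2_eq_square)
        also have "\<dots> \<le> r" using key r_def by simp
        finally show "Y \<in> S" unfolding S_def by simp
      qed
      fix X Y assume X: "X \<in> S" and Y: "Y \<in> S"
      then have X: "norm X \<le> r" and Y: "norm Y \<le> r" unfolding S_def by auto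
      define D where "D = X - Y"
      have TD: "T X - T Y = Bi ** (E ** D - P ** X ** D - P ** D ** Y)"
        unfolding T_def D_def
        by (rule mat_ext) (simp add: mv_assoc algebra_simps)
      have d1: "norm (E ** D) \<le> K * \<eta> * norm D"
        using MM[of E D] E K1 by (smt (verit) mult_right_mono mult_left_mono norm_ge_zero)
      have "norm (P ** X) \<le> K * \<eta> * r"
        using MM[of P X] P X K1 by (smt (verit) mult_mono mult_nonneg_nonneg norm_ge_zero)
      then have d2: "norm (P ** X ** D) \<le> K * (K * \<eta> * r) * norm D"
        using MM[of "P ** X" D] K1 by (smt (verit) mult_right_mono mult_left_mono norm_ge_zero)
      have "norm (P ** D) \<le> K * \<eta> * norm D"
        using MM[of P D] P K1 by (smt (verit) mult_right_mono mult_left_mono norm_ge_zero)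
      then have d3: "norm (P ** D ** Y) \<le> K * (K * \<eta> * norm D) * r"
        using MM[of "P ** D" Y] Y K1 by (smt (verit) mult_mono mult_nonneg_nonneg norm_ge_zero)
      have "norm (E ** D - P ** X ** D - P ** D ** Y) \<le> K * \<eta> * norm D + K * (K * \<eta> * r) * norm D + K * (K * \<eta> * norm D) * r"
        using d1 d2 d3 by (smt (verit) norm_triangle_ineq4)
      also have "\<dots> = K * \<eta> * norm D * (1 + 2 * (K * r))" by (simp add: algebra_simps)
      also have "\<dots> = K * \<eta> * norm D * 2" using Kr by simp
      finally have n1: "norm (E ** D - P ** X ** D - P ** D ** Y) \<le> K * \<eta> * norm D * 2" .
      have "norm (T X - T Y) \<le> K * c * (K * \<eta> * norm D * 2)"
        unfolding TD c_def using MM n1 K1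
        by (smt (verit) c_def c0 mult_left_mono mult_nonneg_nonneg)
      also have "\<dots> = (K^2 * c * \<eta> * 2) * norm D" by (simp add: power2_eq_square)
      also have "\<dots> \<le> 1/2 * norm D"
      proof -
        have "1 / (2*K) \<le> 1/2" using K1 by (simp add: field_simps)
        then show ?thesis using key by (intro mult_right_mono) auto
      qed
      finally show "dist (T X) (T Y) \<le> 1/2 * dist X Y" by (simp add: dist_norm D_def)
    qed auto
    then obtain X0 where X0S: "X0 \<in> S" and TX0: "T X0 = X0" by blast
    have X0r: "norm X0 \<le> r" using X0S unfolding S_def by simp
    have onX0: "onorm (\<lambda>v. X0 *v v) \<le> 1/2"
    proof -
      have "onorm (\<lambda>v. X0 *v v) \<le> K * norm X0" unfolding K_def by (rule onorm_mat)
      also have "\<dots> \<le> K * r" using X0r K1 by (intro mult_left_mono) auto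
      finally show ?thesis using Kr by simp
    qed
    have eqX0: "P ** X0 ** X0 + (B0 - E) ** X0 + ctrans P = 0"
    proof (rule mat_ext)
      fix w
      have "B0 *v (X0 *v w) = B0 *v (T X0 *v w)" using TX0 by simp
      also have "\<dots> = E *v (X0 *v w) - P *v (X0 *v (X0 *v w)) - ctrans P *v w"
        unfolding T_def by (simp add: mv_assoc BBv matrix_vector_mult_add_rdistrib matrix_vector_mult_diff_rdistrib algebra_simps)
      finally have h: "B0 *v (X0 *v w) = E *v (X0 *v w) - P *v (X0 *v (X0 *v w)) - ctrans P *v w" .
      show "(P ** X0 ** X0 + (B0 - E) ** X0 + ctrans P) *v w = 0 *v w"
        by (simp add: mv_assoc matrix_vector_mult_add_rdistrib matrix_vector_mult_diff_rdistrib h)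
    qed
    show "\<exists>!X. onorm (\<lambda>v. X *v v) < 1 \<and> P ** X ** X + (B0 - E) ** X + ctrans P = 0"
    proof (rule ex1I[of _ X0])
      show "onorm (\<lambda>v. X0 *v v) < 1 \<and> P ** X0 ** X0 + (B0 - E) ** X0 + ctrans P = 0"
        using onX0 eqX0 by simp
      fix Y assume "onorm (\<lambda>v. Y *v v) < 1 \<and> P ** Y ** Y + (B0 - E) ** Y + ctrans P = 0"
      then have onY: "onorm (\<lambda>v. Y *v v) < 1" and eqY: "P ** Y ** Y + (B0 - E) ** Y + ctrans P = 0"
        by auto
      define D where "D = Y - X0"
      define \<delta> where "\<delta> = onorm (\<lambda>v. D *v v)"
      have bl: "bounded_linear (\<lambda>v. M *v v)" for M :: "complex^'n^'n" by simp
      have d0: "0 \<le> \<delta>" unfolding \<delta>_def by (rule onorm_pos_le[OF bl])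
      have Dv: "norm (D *v v) \<le> \<delta> * norm v" for v unfolding \<delta>_def by (rule onorm[OF bl])
      have Yv: "norm (Y *v v) \<le> norm v" for v
      proof -
        have "onorm (\<lambda>v. Y *v v) * norm v \<le> 1 * norm v" by (rule mult_right_mono) (use onY in auto)
        then show ?thesis using onorm[OF bl, of Y v] by simp
      qed
      have "norm (D *v v) \<le> (3/4 * \<delta>) * norm v" for v
      proof -
        have e1: "D *v v = Bi *v (E *v (D *v v) - P *v (Y *v (D *v v)) - P *v (D *v (X0 *v v)))"
        proof -
          have "D *v v = Bi *v (B0 *v (D *v v))" by (simp add: BiBv)
          also have "B0 *v (D *v v) = B0 *v (Y *v v) - B0 *v (X0 *v v)"
            unfolding D_def by (simp add: matrix_vector_mult_diff_rdistrib matrix_vector_mult_diff_distrib)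
          also have "\<dots> = E *v (D *v v) - P *v (Y *v (D *v v)) - P *v (D *v (X0 *v v))"
            unfolding quad_vec[OF eqY] quad_vec[OF eqX0] D_def
            by (simp add: matrix_vector_mult_diff_rdistrib matrix_vector_mult_diff_distrib algebra_simps)
          finally show ?thesis .
        qed
        have "norm (D *v v) \<le> K * c * norm (E *v (D *v v) - P *v (Y *v (D *v v)) - P *v (D *v (X0 *v v)))"
          unfolding c_def by (subst e1, rule MV)
        also have "\<dots> \<le> K * c * (K * \<eta> * (\<delta> * norm v) * (5/2))"
        proof (rule mult_left_mono)
          have Kn: "norm (M *v w) \<le> K * \<eta> * norm w" if "norm M \<le> \<eta>" for M :: "complex^'n^'n" and w
            using MV[of M w] that K1 by (smt (verit) mult_right_mono mult_left_mono norm_ge_zero)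
          have t1: "norm (E *v (D *v v)) \<le> K * \<eta> * (\<delta> * norm v)"
            using Kn[OF E, of "D *v v"] Dv[of v] K1 eta0 by (smt (verit) mult_left_mono mult_nonneg_nonneg)
          have t2: "norm (P *v (Y *v (D *v v))) \<le> K * \<eta> * (\<delta> * norm v)"
            using Kn[OF P, of "Y *v (D *v v)"] Yv[of "D *v v"] Dv[of v] K1 eta0 by (smt (verit) mult_left_mono mult_nonneg_nonneg)
          have X0v: "norm (X0 *v v) \<le> 1/2 * norm v"
          proof -
            have "onorm (\<lambda>v. X0 *v v) * norm v \<le> 1/2 * norm v" by (rule mult_right_mono) (use onX0 in auto)
            then show ?thesis using onorm[OF bl, of X0 v] by simp
          qed
          have "norm (D *v (X0 *v v)) \<le> \<delta> * (1/2 * norm v)"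
            using Dv[of "X0 *v v"] X0v d0 by (smt (verit) mult_left_mono)
          then have t3: "norm (P *v (D *v (X0 *v v))) \<le> K * \<eta> * (\<delta> * (1/2 * norm v))"
            using Kn[OF P, of "D *v (X0 *v v)"] K1 eta0 by (smt (verit) mult_left_mono mult_nonneg_nonneg)
          have "norm (E *v (D *v v) - P *v (Y *v (D *v v)) - P *v (D *v (X0 *v v))) \<le>
             K * \<eta> * (\<delta> * norm v) + K * \<eta> * (\<delta> * norm v) + K * \<eta> * (\<delta> * (1/2 * norm v))"
            using t1 t2 t3 by (smt (verit) norm_triangle_ineq4)
          also have "\<dots> = K * \<eta> * (\<delta> * norm v) * (5/2)" by (simp add: algebra_simps)
          finally show "norm (E *v (D *v v) - P *v (Y *v (D *v v)) - P *v (D *v (X0 *v v))) \<le> K * \<eta> * (\<delta> * norm v) * (5/2)" .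
          show "0 \<le> K * c" using K1 c0 by simp
        qed
        also have "\<dots> = (K^2 * c * \<eta> * 2) * (5/4) * (\<delta> * norm v)"
          by (simp add: power2_eq_square algebra_simps)
        also have "\<dots> \<le> (1/2) * (5/4) * (\<delta> * norm v)"
        proof -
          have "1 / (2*K) \<le> 1/2" using K1 by (simp add: field_simps)
          then show ?thesis using key d0 by (intro mult_right_mono) auto
        qed
        also have "\<dots> \<le> (3/4 * \<delta>) * norm v" using d0 by (simp add: algebra_simps)
        finally show ?thesis .
      qed
      then have "\<delta> \<le> 3/4 * \<delta>" unfolding \<delta>_def[of] by (intro onorm_le) (simp add: \<delta>_def)
      then have "\<delta> = 0" using d0 by simp
      then have "\<forall>v. D *v v = 0" unfolding \<delta>_def using onorm_eq_0[OF bl] by simp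
      then have "D = 0" by (intro mat_ext) simp
      then show "Y = X0" unfolding D_def by simp
    qed
  qed
qed

lemma hprod_scale_left: "hprod (c *s x) u = cnj c * hprod x u"
  by (simp add: hprod_def sum_distrib_left mult_ac)
lemma hprod_sum_left: "hprod (\<Sum>j\<in>A. x j) u = (\<Sum>j\<in>A. hprod (x j) u)"
  unfolding hprod_def sum_component cnj_sum sum_distrib_right
  by (rule sum.swap)
lemma herm_hprod:
  fixes H :: "complex^'n^'n"
  assumes "hermitian H"
  shows "hprod w (H *v u) = hprod (H *v w) u"
proof -
  have h: "cnj (H$k$i) = H$i$k" for i k
    using assms unfolding hermitian_def ctrans_def by (metis vec_lambda_beta)
  have "hprod w (H *v u) = (\<Sum>i\<in>UNIV. \<Sum>k\<in>UNIV. cnj (w$i) * H$i$k * u$k)"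
    unfolding hprod_def matrix_vector_mult_def by (simp add: sum_distrib_left mult.assoc)
  also have "\<dots> = (\<Sum>k\<in>UNIV. \<Sum>i\<in>UNIV. cnj (w$i) * H$i$k * u$k)" by (rule sum.swap)
  also have "\<dots> = hprod (H *v w) u"
    unfolding hprod_def matrix_vector_mult_def vec_lambda_beta cnj_sum sum_distrib_right
    by (simp add: h mult_ac)
  finally show ?thesis .
qed

lemma mv_lincomb:
  fixes M :: "'d::finite \<Rightarrow> complex^'n^'n"
  shows "(\<Sum>j\<in>UNIV. cscale (c j) (M j)) *v w = (\<Sum>j\<in>UNIV. c j *s (M j *v w))"
proof -
  have "((\<Sum>j\<in>UNIV. cscale (c j) (M j)) *v w) $ i = (\<Sum>j\<in>UNIV. c j *s (M j *v w)) $ i" for i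
  proof -
    have "((\<Sum>j\<in>UNIV. cscale (c j) (M j)) *v w) $ i = (\<Sum>k\<in>UNIV. \<Sum>j\<in>UNIV. c j * M j $ i $ k * w $ k)"
      unfolding matrix_vector_mult_def cscale_def vec_lambda_beta sum_component sum_distrib_right by simp
    also have "\<dots> = (\<Sum>j\<in>UNIV. \<Sum>k\<in>UNIV. c j * M j $ i $ k * w $ k)" by (rule sum.swap)
    also have "\<dots> = (\<Sum>j\<in>UNIV. c j *s (M j *v w)) $ i"
      unfolding matrix_vector_mult_def sum_component vector_scalar_mult_def vec_lambda_beta sum_distrib_left
      by (simp add: mult.assoc)
    finally show ?thesis .
  qed
  then show ?thesis by (simp add: vec_eq_iff)
qed
lemma hprod_lincomb:
  fixes M :: "'d::finite \<Rightarrow> complex^'n^'n"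
  shows "hprod ((\<Sum>j\<in>UNIV. cscale (c j) (M j)) *v w) u = (\<Sum>j\<in>UNIV. cnj (c j) * hprod (M j *v w) u)"
  by (simp add: mv_lincomb hprod_sum_left hprod_scale_left)

lemma hprod_bound: "cmod (hprod x y) \<le> real CARD('n) * norm x * norm (y::complex^'n)"
proof -
  have "cmod (hprod x y) \<le> (\<Sum>i\<in>UNIV. cmod (cnj (x$i) * y$i))"
    unfolding hprod_def by (rule norm_sum)
  also have "\<dots> \<le> (\<Sum>i\<in>(UNIV::'n set). norm x * norm y)"
    by (rule sum_mono) (simp add: norm_mult, intro mult_mono Finite_Cartesian_Product.norm_nth_le norm_ge_zero)
  finally show ?thesis by simp
qed

lemma matpow_bound:
  fixes X :: "complex^'n^'n"
  shows "norm (matpow X r *v V) \<le> onorm (\<lambda>v. X *v v) ^ r * norm V"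
proof (induction r)
  case 0 then show ?case by simp
next
  case (Suc r)
  have bl: "bounded_linear (\<lambda>v. X *v v)" by simp
  have "norm (matpow X (Suc r) *v V) = norm (X *v (matpow X r *v V))"
    by (simp add: matrix_vector_mul_assoc)
  also have "\<dots> \<le> onorm (\<lambda>v. X *v v) * norm (matpow X r *v V)" by (rule onorm[OF bl])
  also have "\<dots> \<le> onorm (\<lambda>v. X *v v) * (onorm (\<lambda>v. X *v v) ^ r * norm V)"
    by (rule mult_left_mono[OF Suc onorm_pos_le[OF bl]])
  finally show ?case by simp
qed

lemma summable_hterm:
  fixes X M :: "complex^'n^'n"
  assumes "onorm (\<lambda>v. X *v v) < 1"
  shows "summable (\<lambda>r. hprod (matpow X r *v V) ((M ** matpow X r) *v V))"
proof (rule summable_comparison_test)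
  define q where "q = onorm (\<lambda>v. X *v v)"
  have q0: "0 \<le> q" unfolding q_def by (rule onorm_pos_le) simp
  define C where "C = real CARD('n) * KK TYPE('n) * norm M * norm V * norm V"
  show "summable (\<lambda>r. C * (q^2)^r)"
    by (rule summable_mult, rule summable_geometric) (use q0 assms in \<open>simp add: q_def abs_square_less_1\<close>)
  show "\<exists>N. \<forall>r\<ge>N. norm (hprod (matpow X r *v V) ((M ** matpow X r) *v V)) \<le> C * (q^2)^r"
  proof (intro exI allI impI)
    fix r :: nat
    have w: "norm (matpow X r *v V) \<le> q^r * norm V" unfolding q_def by (rule matpow_bound)
    have "norm (hprod (matpow X r *v V) ((M ** matpow X r) *v V)) \<le>
       real CARD('n) * norm (matpow X r *v V) * norm (M *v (matpow X r *v V))"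
      unfolding matrix_vector_mul_assoc[symmetric] by (rule hprod_bound)
    also have "\<dots> \<le> real CARD('n) * (q^r * norm V) * (KK TYPE('n) * norm M * (q^r * norm V))"
    proof (intro mult_mono w order_trans[OF mat_vec_norm] mult_left_mono)
    qed (auto simp: q0)
    also have "\<dots> = C * (q^2)^r" unfolding C_def by (simp add: power_mult[symmetric] power2_eq_square power_mult_distrib mult_ac)
    finally show "norm (hprod (matpow X r *v V) ((M ** matpow X r) *v V)) \<le> C * (q^2)^r" .
  qed
qed


theorem lemma4p7:
  fixes Am :: "'d::finite \<Rightarrow> complex^'n^'n" and b :: "real^'d"
  assumes herm: "\<And>j. hermitian (Am j)"
    and sLnd: "strongly_Levi_nondeg Am"
    and binv: "invertible (\<Sum>j\<in>UNIV. cscale (complex_of_real (b$j)) (Am j))"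
  shows "\<exists>\<epsilon>>0. \<forall>a::complex^'d. norm a < \<epsilon> \<longrightarrow> D_nondeg Am a b \<longrightarrow>
           (\<exists>V::complex^'n. stationary_minimal Am a b V)"
proof -
  define B0 where "B0 = (\<Sum>j\<in>UNIV. cscale (complex_of_real (b$j)) (Am j))"
  obtain \<eta> where eta: "\<eta> > 0" and H: "\<And>E P. norm E \<le> \<eta> \<Longrightarrow> norm P \<le> \<eta> \<Longrightarrow>
     (\<exists>!X. onorm (\<lambda>v. X *v v) < 1 \<and> P ** X ** X + (B0 - E) ** X + ctrans P = 0)"
    using quad_solution[OF binv[folded B0_def]] by blast
  define K where "K = KK TYPE('n)"
  define S where "S = (\<Sum>j\<in>UNIV. norm (Am j))"
  have K1: "1 \<le> K" unfolding K_def using card_ge1[where 'n='n] by simp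
  have S0: "0 \<le> S" unfolding S_def by (simp add: sum_nonneg)
  define \<epsilon> where "\<epsilon> = \<eta> / (2*K*(S+1))"
  have lc: "norm (\<Sum>j\<in>UNIV. cscale (c j) (Am j)) \<le> K * t * S"
    if ct: "\<And>j. cmod (c j) \<le> t" for c t
  proof -
    have "norm (\<Sum>j\<in>UNIV. cscale (c j) (Am j)) \<le> (\<Sum>j\<in>UNIV. norm (cscale (c j) (Am j)))"
      by (rule norm_sum)
    also have "\<dots> \<le> (\<Sum>j\<in>UNIV. K * (t * norm (Am j)))"
    proof (rule sum_mono)
      fix j
      have "norm (cscale (c j) (Am j)) \<le> K * (cmod (c j) * norm (Am j))"
        unfolding K_def by (rule norm_cscale)
      also have "\<dots> \<le> K * (t * norm (Am j))"
        using ct[of j] K1 by (intro mult_left_mono mult_right_mono) auto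
      finally show "norm (cscale (c j) (Am j)) \<le> K * (t * norm (Am j))" .
    qed
    also have "\<dots> = K * t * S" unfolding S_def by (simp add: sum_distrib_left mult_ac)
    finally show ?thesis .
  qed
  show ?thesis
  proof (intro exI[of _ \<epsilon>] conjI allI impI)
    show "\<epsilon> > 0" unfolding \<epsilon>_def using eta K1 S0 by simp
    fix a :: "complex^'d"
    assume na: "norm a < \<epsilon>" and Dn: "D_nondeg Am a b"
    define E where "E = (\<Sum>j\<in>UNIV. cscale (a$j + cnj (a$j)) (Am j))"
    define P where "P = Pmat Am a"
    have AE: "Amat Am a b = B0 - E"
    proof -
      have "cscale (complex_of_real (b$j) - a$j - cnj (a$j)) (Am j) =
        cscale (complex_of_real (b$j)) (Am j) - cscale (a$j + cnj (a$j)) (Am j)" for j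
        by (simp add: cscale_def vec_eq_iff algebra_simps)
      then show ?thesis unfolding Amat_def B0_def E_def by (simp add: sum_subtractf)
    qed
    have small: "K * (2 * norm a) * S \<le> \<eta>"
    proof -
      have "K * (2 * norm a) * S \<le> K * (2 * \<epsilon>) * S"
        using na K1 S0 by (intro mult_right_mono mult_left_mono) auto
      also have "\<dots> = \<eta> / (S+1) * S"
      proof -
        have Kn: "K \<noteq> 0" and Sn: "S + 1 \<noteq> 0" using K1 S0 by auto
        have e: "\<epsilon> * (2*K*(S+1)) = \<eta>" unfolding \<epsilon>_def using Kn Sn by simp
        have "K * (2 * \<epsilon>) * (S+1) = \<eta>" using e by (simp add: mult_ac)
        then have "K * (2 * \<epsilon>) = \<eta> / (S+1)" using Sn by (simp add: eq_divide_eq)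
        then show ?thesis by simp
      qed
      also have "\<dots> \<le> \<eta>" using eta S0 by (simp add: field_simps)
      finally show ?thesis .
    qed
    have ca: "cmod (a$j) \<le> norm a" for j by (rule Finite_Cartesian_Product.norm_nth_le)
    have nP: "norm P \<le> \<eta>"
    proof -
      have "norm P \<le> K * (2 * norm a) * S" unfolding P_def Pmat_def
        by (rule lc) (use ca in \<open>smt (verit) norm_ge_zero\<close>)
      with small show ?thesis by simp
    qed
    have nE: "norm E \<le> \<eta>"
    proof -
      have "norm E \<le> K * (2 * norm a) * S" unfolding E_def
      proof (rule lc)
        fix j
        have "cmod (a$j + cnj (a$j)) \<le> cmod (a$j) + cmod (cnj (a$j))" by (rule norm_triangle_ineq)
        then show "cmod (a$j + cnj (a$j)) \<le> 2 * norm a" using ca[of j] by simp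
      qed
      with small show ?thesis by simp
    qed
    define X where "X = Xsol Am a b"
    have ex: "\<exists>!X. onorm (\<lambda>v. X *v v) < 1 \<and> Pmat Am a ** X ** X + Amat Am a b ** X + ctrans (Pmat Am a) = 0"
      using H[OF nE nP] unfolding AE P_def .
    have Xp: "onorm (\<lambda>v. X *v v) < 1"
      unfolding X_def Xsol_def using theI'[OF ex] by blast
    define Ai where "Ai = matrix_inv (Amat Am a b)"
    obtain V where V: "det (\<chi> j s. Re (\<Sum>r. hprod ((matpow X r) *v V)
               ((Am j ** Ai ** Am s ** (matpow X r)) *v V))) \<noteq> 0"
      using Dn unfolding D_nondeg_def Let_def X_def Ai_def by blast
    show "\<exists>V. stationary_minimal Am a b V"
    proof (intro exI[of _ V])
      show "stationary_minimal Am a b V"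
        unfolding stationary_minimal_def Let_def X_def[symmetric]
      proof (intro allI impI)
        fix lam :: "real^'d"
        define Lm where "Lm = (\<Sum>j\<in>UNIV. cscale (complex_of_real (lam$j)) (Am j))"
        assume hyp: "\<forall>k. (\<Sum>j\<in>UNIV. cscale (complex_of_real (lam$j)) (Am j)) *v (matpow X k *v V) = 0"
        then have hyp': "Lm *v (matpow X k *v V) = 0" for k unfolding Lm_def by blast
        define f where "f j s r = hprod ((matpow X r) *v V) ((Am j ** Ai ** Am s ** (matpow X r)) *v V)" for j s r
        define Mt where "Mt = (\<chi> j s. Re (suminf (f j s)))"
        have summ: "summable (f j s)" for j s
          unfolding f_def by (rule summable_hterm[OF Xp])
        have zero: "(\<Sum>j\<in>UNIV. lam$j * Re (f j s r)) = 0" for s r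
        proof -
          define w where "w = matpow X r *v V"
          define u where "u = Ai *v (Am s *v w)"
          have fj: "f j s r = hprod (Am j *v w) u" for j
            unfolding f_def w_def u_def by (simp add: matrix_vector_mul_assoc[symmetric] herm_hprod[OF herm])
          have "(\<Sum>j\<in>UNIV. lam$j * Re (f j s r)) = Re (\<Sum>j\<in>UNIV. cnj (complex_of_real (lam$j)) * hprod (Am j *v w) u)"
            by (simp add: fj)
          also have "\<dots> = Re (hprod (Lm *v w) u)" unfolding Lm_def hprod_lincomb ..
          also have "\<dots> = 0" using hyp'[of r] unfolding w_def by (simp add: hprod_def)
          finally show ?thesis .
        qed
        have row: "(\<Sum>j\<in>UNIV. lam$j * Mt$j$s) = 0" for s
        proof -
          have "(\<lambda>r. \<Sum>j\<in>UNIV. lam$j * Re (f j s r)) sums (\<Sum>j\<in>UNIV. lam$j * Re (suminf (f j s)))"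
            by (intro sums_sum sums_mult sums_Re summable_sums summ)
          moreover have "(\<lambda>r. \<Sum>j\<in>UNIV. lam$j * Re (f j s r)) sums 0" unfolding zero by simp
          ultimately show ?thesis unfolding Mt_def using sums_unique2 by fastforce
        qed
        have "invertible Mt" using V unfolding invertible_det_nz Mt_def f_def by simp
        then obtain Mi where Mi: "Mt ** Mi = mat 1" unfolding invertible_def by blast
        have l0: "lam v* Mt = 0"
          using row by (simp add: vec_eq_iff vector_matrix_mult_def)
        have "lam = lam v* (Mt ** Mi)" by (simp add: Mi)
        also have "\<dots> = (lam v* Mt) v* Mi" by (simp add: vector_matrix_mul_assoc)
        also have "\<dots> = 0" by (simp add: l0)
        finally show "lam = 0" .
      qed
    qed
  qed
qed

end
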